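(* Let $T$ be a finite rooted tree in which every inner node has at least two children, with node set $V$ and leaf set $L$. There exists a partition of $V\setminus L$ into four (possibly empty) sets each of which is thin.
   Context: A set $X\subseteq V\setminus L$ of inner nodes is thin if for every $x\in X$ other than the root, the parent of $x$ does not belong to $X$, and $x$ has at least one sibling (possibly a leaf) that does not belong to $X$. *)

theory Defs
  imports Main
begin

text \<open>A finite rooted tree with node set V, root r, and parent function par
  (par v is meaningful only for v in V - {r}; par r is irrelevant).
  Every node reaches the root by iterating par.\<close>
definition rooted_tree :: "'a set \<Rightarrow> 'a \<Rightarrow> ('a \<Rightarrow> 'a) \<Rightarrow> bool" where
  "rooted_tree V r par \<longleftrightarrow> finite V \<and> r \<in> V \<and>
     (\<forall>v \<in> V - {r}. par v \<in> V) \<and>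
     (\<forall>v \<in> V. \<exists>n. (par ^^ n) v = r)"

definition children :: "'a set \<Rightarrow> 'a \<Rightarrow> ('a \<Rightarrow> 'a) \<Rightarrow> 'a \<Rightarrow> 'a set" where
  "children V r par x = {y \<in> V - {r}. par y = x}"

definition leaves :: "'a set \<Rightarrow> 'a \<Rightarrow> ('a \<Rightarrow> 'a) \<Rightarrow> 'a set" where
  "leaves V r par = {x \<in> V. children V r par x = {}}"

definition thin :: "'a set \<Rightarrow> 'a \<Rightarrow> ('a \<Rightarrow> 'a) \<Rightarrow> 'a set \<Rightarrow> bool" where
  "thin V r par X \<longleftrightarrow> X \<subseteq> V - leaves V r par \<and>
     (\<forall>x \<in> X. x \<noteq> r \<longrightarrow>
        par x \<notin> X \<and> (\<exists>s \<in> children V r par (par x). s \<noteq> x \<and> s \<notin> X))"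

end

theory Submission
  imports Defs
begin

lemma dep_step:
  fixes par :: "'a \<Rightarrow> 'a"
  assumes ex: "\<exists>n. (par ^^ n) v = r" and vr: "v \<noteq> r"
  shows "(LEAST n. (par ^^ n) v = r) = Suc (LEAST n. (par ^^ n) (par v) = r)"
proof -
  define d where "d = (LEAST n. (par ^^ n) v = r)"
  have hd: "(par ^^ d) v = r" unfolding d_def using ex by (rule LeastI_ex)
  have d0: "d \<noteq> 0" proof assume "d = 0" thus False using hd vr by simp qed
  then obtain m where m: "d = Suc m" using not0_implies_Suc by blast
  have hm: "(par ^^ m) (par v) = r" using hd unfolding m funpow_Suc_right comp_def .
  define e where "e = (LEAST n. (par ^^ n) (par v) = r)"
  have he: "(par ^^ e) (par v) = r" unfolding e_def using hm by (rule LeastI)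
  have "e \<le> m" unfolding e_def using hm by (rule Least_le)
  moreover have "(par ^^ Suc e) v = r" unfolding funpow_Suc_right comp_def by (rule he)
  hence "d \<le> Suc e" unfolding d_def by (rule Least_le)
  ultimately show ?thesis using m unfolding d_def[symmetric] e_def[symmetric] by simp
qed

theorem lemma3p9:
  fixes V :: "'a set" and r :: 'a and par :: "'a \<Rightarrow> 'a"
  assumes "rooted_tree V r par"
    and "\<forall>x \<in> V - leaves V r par. card (children V r par x) \<ge> 2"
  shows "\<exists>X1 X2 X3 X4.
           X1 \<union> X2 \<union> X3 \<union> X4 = V - leaves V r par \<and>
           X1 \<inter> X2 = {} \<and> X1 \<inter> X3 = {} \<and> X1 \<inter> X4 = {} \<and>
           X2 \<inter> X3 = {} \<and> X2 \<inter> X4 = {} \<and> X3 \<inter> X4 = {} \<and>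
           thin V r par X1 \<and> thin V r par X2 \<and> thin V r par X3 \<and> thin V r par X4"
proof -
  define I where "I = V - leaves V r par"
  define dep where "dep v = (LEAST n. (par ^^ n) v = r)" for v
  define fl where "fl v = (v \<noteq> r \<and> v = (SOME c. c \<in> children V r par (par v)))" for v
  define X where "X a b = {v \<in> I. even (dep v) = a \<and> fl v = b}" for a b
  have tree: "\<forall>v \<in> V - {r}. par v \<in> V" "\<forall>v \<in> V. \<exists>n. (par ^^ n) v = r"
    using assms(1) unfolding rooted_tree_def by auto
  have depS: "dep v = Suc (dep (par v))" if "v \<in> V" "v \<noteq> r" for v
    unfolding dep_def by (rule dep_step[OF tree(2)[rule_format, OF that(1)] that(2)])
  have thinX: "thin V r par (X a b)" for a b
    unfolding thin_def
  proof (intro conjI ballI impI)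
    show "X a b \<subseteq> V - leaves V r par" unfolding X_def I_def by auto
  next
    fix x assume xX: "x \<in> X a b" and xr: "x \<noteq> r"
    have xV: "x \<in> V" using xX unfolding X_def I_def by auto
    show "par x \<notin> X a b" using xX depS[OF xV xr] unfolding X_def by auto
    define p where "p = par x"
    have xc: "x \<in> children V r par p" unfolding children_def p_def using xV xr by auto
    have pV: "p \<in> V" using tree(1) xV xr unfolding p_def by auto
    have pI: "p \<in> V - leaves V r par" using pV xc unfolding leaves_def by auto
    have card: "card (children V r par p) \<ge> 2" using assms(2) pI by auto
    define c where "c = (SOME c. c \<in> children V r par p)"
    have cc: "c \<in> children V r par p" unfolding c_def using xc by (metis someI)
    have flc: "fl y = (y = c)" if "y \<in> children V r par p" for y
      using that unfolding fl_def c_def children_def by auto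
    show "\<exists>s\<in>children V r par (par x). s \<noteq> x \<and> s \<notin> X a b"
    proof (cases "x = c")
      case True
      obtain s where s: "s \<in> children V r par p" "s \<noteq> x"
      proof -
        have "\<not> children V r par p \<subseteq> {x}"
        proof
          assume "children V r par p \<subseteq> {x}"
          hence "card (children V r par p) \<le> card {x}"
            by (intro card_mono) auto
          thus False using card by simp
        qed
        thus ?thesis using that by blast
      qed
      have "fl s \<noteq> fl x" using flc[OF s(1)] flc[OF xc] s(2) True by simp
      thus ?thesis using s xX unfolding X_def p_def by auto
    next
      case False
      have "fl c \<noteq> fl x" using flc[OF cc] flc[OF xc] False by simp
      thus ?thesis using cc False xX unfolding X_def p_def by auto
    qed
  qed
  have U: "X True True \<union> X True False \<union> X False True \<union> X False False = V - leaves V r par"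
    unfolding X_def I_def by auto
  show ?thesis
    apply (rule exI[of _ "X True True"], rule exI[of _ "X True False"],
           rule exI[of _ "X False True"], rule exI[of _ "X False False"])
    using U thinX[of True True] thinX[of True False] thinX[of False True] thinX[of False False]
    by (simp add: X_def disjoint_iff)
qed

end
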